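(* For every integer $n$, \[ \sum_{j\geq 0} p(n-4\pi_j) \equiv \begin{cases} 1 \pmod 2 & \text{if } n \text{ is a triangular number},\\ 0 \pmod 2 & \text{otherwise,}\end{cases} \] where $\pi_j = \frac38 j^2 + \frac{3-(-1)^j}{8}j + \frac{1-(-1)^j}{16}$ is the $j$th generalized pentagonal number ($\pi_0,\pi_1,\pi_2,\dots = 0,1,2,5,7,12,15,\dots$).
   Context: $p(m)$ denotes the number of partitions of $m$, with $p(0)=1$ and $p(m)=0$ for $m<0$. Triangular numbers are $k(k+1)/2$ for integers $k\geq 0$. *)

theory Defs
  imports Main "HOL-Library.Multiset" "HOL-Number_Theory.Cong"
begin

definition partition_count :: "int \<Rightarrow> nat" where
  "partition_count m = (if m < 0 then 0 else
     card {M :: nat multiset. (\<forall>x \<in># M. 0 < x) \<and> int (sum_mset M) = m})"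

(* j-th generalized pentagonal number:
   pi_j = 3/8 j^2 + (3 - (-1)^j)/8 j + (1 - (-1)^j)/16, written as (16 pi_j) div 16 *)
definition gen_pent :: "nat \<Rightarrow> int" where
  "gen_pent j = (6 * int j ^ 2 + 2 * (3 - (-1) ^ j) * int j + (1 - (-1) ^ j)) div 16"

definition triangular :: "int \<Rightarrow> bool" where
  "triangular n \<longleftrightarrow> (\<exists>k::nat. n = int k * (int k + 1) div 2)"

end

theory Submission
  imports Defs "HOL-Library.Z2" "HOL-Computational_Algebra.Formal_Power_Series"
begin

definition tr :: "nat \<Rightarrow> nat" where "tr n = (\<Sum>i<n. i)"

lemma tr_Suc[simp]: "tr (Suc n) = tr n + n" by (simp add: tr_def)
lemma tr_0[simp]: "tr 0 = 0" by (simp add: tr_def)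

fun qbin :: "'a::comm_ring_1 \<Rightarrow> nat \<Rightarrow> nat \<Rightarrow> 'a" where
  "qbin p 0 k = (if k = 0 then 1 else 0)"
| "qbin p (Suc n) 0 = 1"
| "qbin p (Suc n) (Suc k) = qbin p n (Suc k) + p ^ (n - k) * qbin p n k"

lemma qbin_gt: "n < k \<Longrightarrow> qbin p n k = 0"
  by (induction p n k rule: qbin.induct) auto

lemma qbin_0[simp]: "qbin p n 0 = 1" by (cases n) auto

definition pp :: "'a::comm_ring_1 \<Rightarrow> nat \<Rightarrow> 'a" where
  "pp p n = (\<Prod>i\<in>{1..n}. 1 - p ^ i)"

lemma pp_0[simp]: "pp p 0 = 1" by (simp add: pp_def)
lemma pp_Suc: "pp p (Suc n) = pp p n * (1 - p ^ Suc n)"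
  by (simp add: pp_def)

lemma qbin_pp: "k \<le> n \<Longrightarrow> qbin p n k * pp p k * pp p (n - k) = pp p n"
proof (induction n arbitrary: k)
  case 0 then show ?case by simp
next
  case (Suc n)
  show ?case
  proof (cases k)
    case 0 then show ?thesis by simp
  next
    case (Suc k')
    with Suc.prems have k': "k' \<le> n" by simp
    have A: "qbin p n (Suc k') * pp p (Suc k') * pp p (n - k') = pp p n * (1 - p ^ (n - k'))"
    proof (cases "k' = n")
      case True then show ?thesis by (simp add: qbin_gt)
    next
      case False
      then have "n - k' = Suc (n - Suc k')" using k' by simp
      then have "pp p (n - k') = pp p (n - Suc k') * (1 - p ^ (n - k'))" by (simp add: pp_Suc)
      moreover have "qbin p n (Suc k') * pp p (Suc k') * pp p (n - Suc k') = pp p n"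
        using Suc.IH[of "Suc k'"] False k' by simp
      ultimately show ?thesis by (metis mult.assoc)
    qed
    have B: "p ^ (n - k') * qbin p n k' * pp p (Suc k') * pp p (n - k') = pp p n * (1 - p ^ Suc k') * p ^ (n - k')"
    proof -
      have "p ^ (n - k') * qbin p n k' * pp p (Suc k') * pp p (n - k') = (qbin p n k' * pp p k' * pp p (n - k')) * (1 - p ^ Suc k') * p ^ (n - k')"
        by (simp add: pp_Suc algebra_simps)
      then show ?thesis using Suc.IH[OF k'] by simp
    qed
    have "qbin p (Suc n) k * pp p k * pp p (Suc n - k)
        = qbin p n (Suc k') * pp p (Suc k') * pp p (n - k') + p ^ (n - k') * qbin p n k' * pp p (Suc k') * pp p (n - k')"
      using Suc by (simp add: algebra_simps)
    also have "\<dots> = pp p n * (1 - p ^ (n - k')) + pp p n * (1 - p ^ Suc k') * p ^ (n - k')"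
      using A B by simp
    also have "\<dots> = pp p n * (1 - p ^ Suc n)"
    proof -
      have e: "Suc k' + (n - k') = Suc n" using k' by simp
      have "p ^ Suc k' * p ^ (n - k') = p ^ Suc n" by (metis e power_add)
      moreover have "pp p n * (1 - p ^ (n - k')) + pp p n * (1 - p ^ Suc k') * p ^ (n - k') = pp p n * (1 - p ^ Suc k' * p ^ (n - k'))"
        by (simp add: algebra_simps)
      ultimately show ?thesis by simp
    qed
    finally show ?thesis by (simp add: pp_Suc)
  qed
qed

lemma cauchy: "(\<Prod>i<n. u + x * p ^ i) = (\<Sum>j\<le>n. qbin p n j * p ^ tr j * x ^ j * u ^ (n - j))"
proof (induction n)
  case 0 then show ?case by simp
next
  case (Suc n)
  let ?R = "\<lambda>n. (\<Sum>j\<le>n. qbin p n j * p ^ tr j * x ^ j * u ^ (n - j))"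
  have 1: "u * ?R n = u ^ Suc n + (\<Sum>i\<le>n. qbin p n (Suc i) * p ^ tr (Suc i) * x ^ Suc i * u ^ (n - i))"
  proof -
    have "u * ?R n = (\<Sum>j\<le>n. qbin p n j * p ^ tr j * x ^ j * u ^ (Suc n - j))"
      by (simp add: sum_distrib_left Suc_diff_le algebra_simps)
    also have "\<dots> = (\<Sum>j\<le>Suc n. qbin p n j * p ^ tr j * x ^ j * u ^ (Suc n - j))"
      by (simp add: qbin_gt)
    also have "\<dots> = u ^ Suc n + (\<Sum>i\<le>n. qbin p n (Suc i) * p ^ tr (Suc i) * x ^ Suc i * u ^ (n - i))"
      by (subst sum.atMost_Suc_shift) simp
    finally show ?thesis .
  qed
  have 2: "x * p ^ n * ?R n = (\<Sum>i\<le>n. p ^ (n - i) * qbin p n i * p ^ tr (Suc i) * x ^ Suc i * u ^ (n - i))"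
    unfolding sum_distrib_left
  proof (rule sum.cong[OF refl])
    fix i assume "i \<in> {..n}"
    then have eq: "p ^ n * p ^ tr i = p ^ (n - i) * p ^ tr (Suc i)"
      by (simp add: power_add[symmetric])
    then show "x * p ^ n * (qbin p n i * p ^ tr i * x ^ i * u ^ (n - i)) =
        p ^ (n - i) * qbin p n i * p ^ tr (Suc i) * x ^ Suc i * u ^ (n - i)"
    proof -
      have "x * p ^ n * (qbin p n i * p ^ tr i * x ^ i * u ^ (n - i)) = (p ^ n * p ^ tr i) * qbin p n i * (x * x ^ i) * u ^ (n - i)"
        by (simp only: mult_ac)
      also have "\<dots> = (p ^ (n - i) * p ^ tr (Suc i)) * qbin p n i * (x * x ^ i) * u ^ (n - i)"
        by (simp only: eq)
      also have "\<dots> = p ^ (n - i) * qbin p n i * p ^ tr (Suc i) * x ^ Suc i * u ^ (n - i)"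
        by (simp only: mult_ac power_Suc)
      finally show ?thesis .
    qed
  qed
  have "?R (Suc n) = u ^ Suc n + (\<Sum>i\<le>n. qbin p (Suc n) (Suc i) * p ^ tr (Suc i) * x ^ Suc i * u ^ (n - i))"
    by (subst sum.atMost_Suc_shift) simp
  also have "\<dots> = u * ?R n + x * p ^ n * ?R n"
    unfolding 1 2 by (simp add: algebra_simps sum.distrib)
  finally show ?case using Suc.IH by (simp add: algebra_simps)
qed

type_synonym bf = "bit fps"

definition eqm :: "nat \<Rightarrow> bf \<Rightarrow> bf \<Rightarrow> bool" where
  "eqm D f g \<longleftrightarrow> (\<forall>i<D. fps_nth f i = fps_nth g i)"

lemma eqm_refl[simp]: "eqm D f f" by (simp add: eqm_def)
lemma eqm_sym: "eqm D f g \<Longrightarrow> eqm D g f" by (simp add: eqm_def)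
lemma eqm_trans: "eqm D f g \<Longrightarrow> eqm D g h \<Longrightarrow> eqm D f h" by (simp add: eqm_def)

lemma eqm_mult: "eqm D a b \<Longrightarrow> eqm D c d \<Longrightarrow> eqm D (a * c) (b * d)"
  unfolding eqm_def fps_mult_nth
  by (auto intro!: sum.cong)

lemma eqm_add: "eqm D a b \<Longrightarrow> eqm D c d \<Longrightarrow> eqm D (a + c) (b + d)"
  unfolding eqm_def by auto

lemma eqm_sum: "(\<And>x. x \<in> A \<Longrightarrow> eqm D (f x) (g x)) \<Longrightarrow> eqm D (sum f A) (sum g A)"
  unfolding eqm_def fps_sum_nth by (auto intro!: sum.cong)

lemma eqm_prod: "(\<And>x. x \<in> A \<Longrightarrow> eqm D (f x) (g x)) \<Longrightarrow> eqm D (prod f A) (prod g A)"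
proof (induction A rule: infinite_finite_induct)
  case (insert x F)
  then show ?case by (simp add: eqm_mult)
qed auto

lemma eqm_Xpow: "D \<le> e \<Longrightarrow> eqm D (fps_X ^ e * f) 0"
  unfolding eqm_def by (simp add: fps_X_power_mult_nth)

lemma eqm_1X: "D \<le> e \<Longrightarrow> eqm D (1 + fps_X ^ e) 1"
  unfolding eqm_def by auto

lemma bf_neg[simp]: "- (f :: bf) = f"
  by (rule fps_ext) simp

lemma bf_minus: "(f :: bf) - g = f + g"
  by (metis bf_neg diff_conv_add_uminus)

lemma bf_two[simp]: "(2 :: bf) = 0"
  by (metis bf_neg mult_2 neg_equal_iff_equal one_add_one add.inverse_neutral bf_minus diff_self)

lemma eqm_cancel:
  assumes "eqm D (a * c) (b * c)" "fps_nth c 0 \<noteq> 0"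
  shows "eqm D a b"
proof -
  have "eqm D (a * c * inverse c) (b * c * inverse c)"
    by (rule eqm_mult[OF assms(1) eqm_refl])
  then show ?thesis using inverse_mult_eq_1'[OF assms(2)] by (simp add: mult.assoc)
qed

lemma eqm_1_nth0: "D > 0 \<Longrightarrow> eqm D f 1 \<Longrightarrow> fps_nth f 0 = 1"
  unfolding eqm_def by auto

definition pr :: "nat set \<Rightarrow> bf" where
  "pr S = (\<Prod>e\<in>S. 1 + fps_X ^ e)"

lemma eqm_pr_big: "(\<And>e. e \<in> S \<Longrightarrow> D \<le> e) \<Longrightarrow> eqm D (pr S) 1"
  unfolding pr_def using eqm_prod[of S D "\<lambda>e. 1 + fps_X ^ e" "\<lambda>_. 1"] eqm_1X by simp

lemma eqm_pr_trunc: "finite S \<Longrightarrow> eqm D (pr S) (pr (S \<inter> {..<D}))"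
proof -
  assume fin: "finite S"
  have "S = (S \<inter> {..<D}) \<union> (S - {..<D})" by auto
  then have "pr S = pr (S \<inter> {..<D}) * pr (S - {..<D})"
    unfolding pr_def using fin by (metis Diff_disjoint Int_Diff_disjoint finite_Diff finite_Int prod.union_disjoint inf_commute)
  moreover have "eqm D (pr (S - {..<D})) 1" by (rule eqm_pr_big) auto
  ultimately show ?thesis using eqm_mult[OF eqm_refl, of D "pr (S - {..<D})" 1 "pr (S \<inter> {..<D})"] by simp
qed

lemma pr_union: "finite A \<Longrightarrow> finite B \<Longrightarrow> A \<inter> B = {} \<Longrightarrow> pr (A \<union> B) = pr A * pr B"
  unfolding pr_def by (rule prod.union_disjoint)

lemma pr_image: "inj_on g I \<Longrightarrow> pr (g ` I) = (\<Prod>i\<in>I. 1 + fps_X ^ g i)"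
  unfolding pr_def by (simp add: prod.reindex)

lemma sq_1X: "(1 + fps_X ^ e :: bf) ^ 2 = 1 + fps_X ^ (2 * e)"
  by (simp add: power2_eq_square algebra_simps power_mult_distrib power_add[symmetric] mult_2)

lemma pr_sq: "finite S \<Longrightarrow> pr S ^ 2 = pr ((*) 2 ` S)"
  unfolding pr_def by (simp add: prod.reindex inj_on_def sq_1X prod_power_distrib)

lemma tr_int: "2 * int (tr n) = int n * (int n - 1)"
  by (induction n) (auto simp: algebra_simps)

definition ex :: "nat \<Rightarrow> nat \<Rightarrow> nat \<Rightarrow> nat \<Rightarrow> nat" where
  "ex a b N j = (if j \<le> N then a * tr (Suc (N - j)) - b * (N - j) else a * tr (j - N) + b * (j - N))"

lemma tr_Suc_ge: "t \<le> tr (Suc t)"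
  by (cases t) auto

lemma ex_aux: "b \<le> a \<Longrightarrow> b * t \<le> a * tr (Suc t)"
  using tr_Suc_ge[of t] by (meson le_trans mult_le_mono1 mult_le_mono2)

lemma ex_id:
  assumes "b \<le> a" "j \<le> 2 * N"
  shows "a * tr j + b * j + a * N * (2 * N - j) = b * N + a * tr N + a * N * N + ex a b N j"
proof (cases "j \<le> N")
  case True
  define t where "t = N - j"
  have N: "N = j + t" using True t_def by simp
  have le: "b * t \<le> a * tr (Suc t)" by (rule ex_aux[OF assms(1)])
  have ex: "ex a b N j = a * tr (Suc t) - b * t" using True t_def by (simp add: ex_def)
  have "int (a * tr j + b * j + a * N * (2 * N - j)) = int (b * N + a * tr N + a * N * N + ex a b N j)"
    unfolding ex using le assms(2)
    apply (simp add: of_nat_diff N)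
    using tr_int[of j] tr_int[of "j + t"] tr_int[of "Suc t"]
    apply (simp add: algebra_simps)
    apply algebra
    done
  then show ?thesis by (metis of_nat_eq_iff)
next
  case False
  define m where "m = j - N"
  have j: "j = N + m" using False m_def by simp
  have ex: "ex a b N j = a * tr m + b * m" using False m_def by (simp add: ex_def)
  have "int (a * tr j + b * j + a * N * (2 * N - j)) = int (b * N + a * tr N + a * N * N + ex a b N j)"
    unfolding ex using assms(2)
    apply (simp add: of_nat_diff j)
    using tr_int[of m] tr_int[of "N + m"] tr_int[of N]
    apply (simp add: algebra_simps)
    apply algebra
    done
  then show ?thesis by (metis of_nat_eq_iff)
qed

lemma ex_ge:
  assumes "b < a" "0 < b"
  shows "(if j \<le> N then N - j else j - N) \<le> ex a b N j"
proof (cases "j \<le> N")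
  case True
  define t where "t = N - j"
  have "(b + 1) * t \<le> a * tr (Suc t)" using ex_aux[of "b+1" a t] assms by simp
  then show ?thesis using True by (simp add: ex_def t_def[symmetric] algebra_simps)
next
  case False
  have "j - N \<le> b * (j - N)" using assms by simp
  then show ?thesis using False by (simp add: ex_def trans_le_add2)
qed

lemma prod_lessThan_add: "(\<Prod>i<a+b. f i) = (\<Prod>i<a. f i) * (\<Prod>i<b. f (a+i))" for a b :: nat
  by (induction b) (auto simp: mult_ac)

definition Lp :: "nat \<Rightarrow> nat \<Rightarrow> nat \<Rightarrow> bf" where
  "Lp a b N = (\<Prod>k\<in>{1..N}. 1 + fps_X ^ (a * k - b)) * (\<Prod>k<N. 1 + fps_X ^ (a * k + b))"

lemma jtp_exact:
  assumes "0 < b" "b < a"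
  shows "Lp a b N = (\<Sum>j\<le>2*N. qbin (fps_X ^ a) (2*N) j * fps_X ^ (ex a b N j))"
proof -
  let ?X = "fps_X :: bf"
  define c where "c = b*N + a*tr N + a*N*N"
  have C: "(\<Prod>i<2*N. ?X^(a*N) + ?X^b * (?X^a)^i) = (\<Sum>j\<le>2*N. qbin (?X^a) (2*N) j * (?X^a)^tr j * (?X^b)^j * (?X^(a*N))^(2*N-j))"
    by (rule cauchy)
  have R: "(\<Sum>j\<le>2*N. qbin (?X^a) (2*N) j * (?X^a)^tr j * (?X^b)^j * (?X^(a*N))^(2*N-j))
      = ?X^c * (\<Sum>j\<le>2*N. qbin (?X^a) (2*N) j * ?X^(ex a b N j))"
    unfolding sum_distrib_left
  proof (rule sum.cong[OF refl])
    fix j assume "j \<in> {..2*N}"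
    then have e: "a * tr j + b * j + a * N * (2 * N - j) = c + ex a b N j"
      using ex_id[of b a j N] assms unfolding c_def by simp
    have "(?X^a)^tr j * (?X^b)^j * (?X^(a*N))^(2*N-j) = ?X^(a * tr j + b * j + a * N * (2 * N - j))"
      by (simp add: power_add power_mult[symmetric] mult.commute)
    also have "\<dots> = ?X^c * ?X^(ex a b N j)" by (simp add: e power_add)
    finally have h: "(?X^a)^tr j * (?X^b)^j * (?X^(a*N))^(2*N-j) = ?X^c * ?X^(ex a b N j)" .
    have "qbin (?X^a) (2*N) j * (?X^a)^tr j * (?X^b)^j * (?X^(a*N))^(2*N-j) = qbin (?X^a) (2*N) j * ((?X^a)^tr j * (?X^b)^j * (?X^(a*N))^(2*N-j))"
      by (simp only: mult.assoc)
    also have "\<dots> = qbin (?X^a) (2*N) j * (?X^c * ?X^(ex a b N j))" by (simp only: h)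
    also have "\<dots> = ?X^c * (qbin (?X^a) (2*N) j * ?X^(ex a b N j))" by (rule mult.left_commute)
    finally show "qbin (?X^a) (2*N) j * (?X^a)^tr j * (?X^b)^j * (?X^(a*N))^(2*N-j) = ?X^c * (qbin (?X^a) (2*N) j * ?X^(ex a b N j))" .
  qed
  have L1: "(\<Prod>i<N. ?X^(a*N) + ?X^b * (?X^a)^i) = ?X^(b*N + a*tr N) * (\<Prod>k\<in>{1..N}. 1 + ?X^(a*k-b))"
  proof -
    have "(\<Prod>i<N. ?X^(a*N) + ?X^b * (?X^a)^i) = (\<Prod>i<N. ?X^(b + a*i) * (1 + ?X^(a*(N-i)-b)))"
    proof (rule prod.cong[OF refl])
      fix i assume "i \<in> {..<N}"
      then have "1 \<le> N - i" by simp
      then have "a * 1 \<le> a * (N - i)" by (rule mult_le_mono2)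
      then have "a \<le> a * (N - i)" by simp
      then have "b + a*i + (a*(N-i)-b) = a * N" using assms by (simp add: algebra_simps diff_mult_distrib2)
      then have "?X^(b + a*i) * ?X^(a*(N-i)-b) = ?X^(a*N)" by (metis power_add)
      then show "?X^(a*N) + ?X^b * (?X^a)^i = ?X^(b + a*i) * (1 + ?X^(a*(N-i)-b))"
        by (simp add: algebra_simps power_add power_mult)
    qed
    also have "\<dots> = (\<Prod>i<N. ?X^(b + a*i)) * (\<Prod>i<N. 1 + ?X^(a*(N-i)-b))"
      by (rule prod.distrib)
    also have "(\<Prod>i<N. ?X^(b + a*i)) = ?X^(\<Sum>i<N. b + a*i)"
      by (simp add: power_sum)
    also have "(\<Sum>i<N. b + a*i) = b*N + a*tr N"
      by (simp add: sum.distrib tr_def sum_distrib_left)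
    also have "(\<Prod>i<N. 1 + ?X^(a*(N-i)-b)) = (\<Prod>k\<in>{1..N}. 1 + ?X^(a*k-b))"
      by (rule prod.reindex_bij_witness[of _ "\<lambda>k. N - k" "\<lambda>i. N - i"]) auto
    finally show ?thesis .
  qed
  have L2: "(\<Prod>i<N. ?X^(a*N) + ?X^b * (?X^a)^(N+i)) = ?X^(a*N*N) * (\<Prod>k<N. 1 + ?X^(a*k+b))"
  proof -
    have "(\<Prod>i<N. ?X^(a*N) + ?X^b * (?X^a)^(N+i)) = (\<Prod>i<N. ?X^(a*N) * (1 + ?X^(a*i+b)))"
    proof (rule prod.cong[OF refl])
      fix i
      have "?X^b * (?X^a)^(N+i) = ?X^(a*N) * ?X^(a*i+b)"
        by (simp only: power_mult[symmetric] power_add[symmetric]) (simp add: algebra_simps)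
      then show "?X^(a*N) + ?X^b * (?X^a)^(N+i) = ?X^(a*N) * (1 + ?X^(a*i+b))"
        by (simp add: distrib_left)
    qed
    also have "\<dots> = (\<Prod>i<N. ?X^(a*N)) * (\<Prod>k<N. 1 + ?X^(a*k+b))"
      by (rule prod.distrib)
    also have "(\<Prod>i<N. ?X^(a*N)) = ?X^(a*N*N)"
      by (simp add: power_mult)
    finally show ?thesis .
  qed
  have "(\<Prod>i<2*N. ?X^(a*N) + ?X^b * (?X^a)^i) = ?X^c * Lp a b N"
    unfolding mult_2 prod_lessThan_add L1 L2 Lp_def c_def
    by (simp add: power_add algebra_simps)
  then have "?X^c * Lp a b N = ?X^c * (\<Sum>j\<le>2*N. qbin (?X^a) (2*N) j * ?X^(ex a b N j))"
    using C R by simp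
  then show ?thesis by simp
qed

lemma pp_pr: "0 < a \<Longrightarrow> pp (fps_X ^ a :: bf) K = pr ((*) a ` {1..K})"
  unfolding pp_def by (simp add: pr_image inj_on_def bf_minus power_mult)

lemma pp_nth0: "0 < a \<Longrightarrow> fps_nth (pp (fps_X ^ a :: bf) K) 0 = 1"
proof -
  assume a: "0 < a"
  have "eqm 1 (pr ((*) a ` {1..K})) 1"
    by (rule eqm_pr_big) (use a in auto)
  then have "fps_nth (pr ((*) a ` {1..K})) 0 = 1" by (rule eqm_1_nth0[rotated]) simp
  with pp_pr[OF a] show ?thesis by simp
qed

lemma pp_eqm: "0 < a \<Longrightarrow> D \<le> K \<Longrightarrow> eqm D (pp (fps_X ^ a :: bf) K) (pp (fps_X ^ a) D)"
proof -
  assume a: "0 < a" and K: "D \<le> K"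
  have "(*) a ` {1..K} \<inter> {..<D} = (*) a ` {1..D} \<inter> {..<D}"
  proof (intro equalityI subsetI)
    fix x assume x: "x \<in> (*) a ` {1..K} \<inter> {..<D}"
    then have "x \<in> (*) a ` {1..K}" by simp
    then obtain k where k: "k \<in> {1..K}" "x = a * k" by (rule imageE)
    have "k \<le> a * k" using a by simp
    moreover have "a * k < D" using x k by simp
    ultimately have "k < D" by linarith
    then have "k \<in> {1..D}" using k by auto
    then show "x \<in> (*) a ` {1..D} \<inter> {..<D}" using k x by auto
  qed (use K in auto)
  moreover have "eqm D (pr ((*) a ` {1..K})) (pr ((*) a ` {1..K} \<inter> {..<D}))" by (rule eqm_pr_trunc) simp
  moreover have "eqm D (pr ((*) a ` {1..D})) (pr ((*) a ` {1..D} \<inter> {..<D}))" by (rule eqm_pr_trunc) simp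
  ultimately show ?thesis unfolding pp_pr[OF a] by (metis eqm_sym eqm_trans)
qed

lemma qbin_mid:
  assumes a: "0 < a" and "D \<le> j" "D \<le> n - j" "j \<le> n"
  shows "eqm D (pp (fps_X ^ a :: bf) D * qbin (fps_X ^ a) n j) 1"
proof -
  let ?p = "fps_X ^ a :: bf"
  have "eqm D (qbin ?p n j * pp ?p j * pp ?p (n - j)) (qbin ?p n j * pp ?p D * pp ?p D)"
    using pp_eqm[OF a] assms by (intro eqm_mult eqm_refl) auto
  moreover have "eqm D (pp ?p n) (pp ?p D)" using pp_eqm[OF a] assms by simp
  ultimately have "eqm D (qbin ?p n j * pp ?p D * pp ?p D) (pp ?p D)"
    using qbin_pp[OF assms(4), of ?p] eqm_trans eqm_sym by metis
  moreover have "qbin ?p n j * pp ?p D * pp ?p D = (pp ?p D * qbin ?p n j) * pp ?p D" by (simp only: mult_ac)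
  ultimately have "eqm D ((pp ?p D * qbin ?p n j) * pp ?p D) (1 * pp ?p D)" by simp
  then show ?thesis by (rule eqm_cancel) (simp add: pp_nth0[OF a])
qed

lemma jtp_trunc:
  assumes "0 < b" "b < a"
  shows "eqm D (pp (fps_X ^ a) D * Lp a b (2*D)) (\<Sum>j\<le>2*(2*D). fps_X ^ (ex a b (2*D) j))"
proof -
  have a: "0 < a" using assms by simp
  have "pp (fps_X ^ a) D * Lp a b (2*D) = (\<Sum>j\<le>2*(2*D). (pp (fps_X ^ a) D * qbin (fps_X ^ a) (2*(2*D)) j) * fps_X ^ (ex a b (2*D) j))"
    unfolding jtp_exact[OF assms] sum_distrib_left by (simp add: mult.assoc)
  also have "eqm D \<dots> (\<Sum>j\<le>2*(2*D). fps_X ^ (ex a b (2*D) j))"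
  proof (rule eqm_sum)
    fix j assume j: "j \<in> {..2*(2*D)}"
    show "eqm D ((pp (fps_X ^ a) D * qbin (fps_X ^ a) (2*(2*D)) j) * fps_X ^ (ex a b (2*D) j)) (fps_X ^ (ex a b (2*D) j))"
    proof (cases "D \<le> j \<and> j \<le> 3 * D")
      case True
      then have "eqm D (pp (fps_X ^ a) D * qbin (fps_X ^ a) (2*(2*D)) j) 1"
        using j by (intro qbin_mid[OF a]) auto
      then show ?thesis using eqm_mult[OF _ eqm_refl] by (metis mult_1)
    next
      case False
      have "(if j \<le> 2*D then 2*D - j else j - 2*D) \<le> ex a b (2*D) j" by (rule ex_ge[OF assms(2,1)])
      then have e: "D \<le> ex a b (2*D) j" using False by (auto split: if_splits)
      have "eqm D ((pp (fps_X ^ a) D * qbin (fps_X ^ a) (2*(2*D)) j) * fps_X ^ (ex a b (2*D) j)) 0"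
        using eqm_Xpow[OF e, of "pp (fps_X ^ a) D * qbin (fps_X ^ a) (2*(2*D)) j"] by (simp only: mult.commute)
      moreover have "eqm D (fps_X ^ (ex a b (2*D) j)) 0" using eqm_Xpow[OF e, of 1] by simp
      ultimately show ?thesis using eqm_sym eqm_trans by blast
    qed
  qed
  finally show ?thesis .
qed

definition Fs :: "nat \<Rightarrow> nat \<Rightarrow> nat set" where
  "Fs D c = {e. 0 < e \<and> e < D \<and> c dvd e}"
definition Os :: "nat \<Rightarrow> nat \<Rightarrow> nat set" where
  "Os D c = {e. e < D \<and> (\<exists>k. odd k \<and> e = c * k)}"

lemma Fs_fin[simp]: "finite (Fs D c)" unfolding Fs_def by (rule finite_subset[of _ "{..<D}"]) auto
lemma Os_fin[simp]: "finite (Os D c)" unfolding Os_def by (rule finite_subset[of _ "{..<D}"]) auto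

lemma Fs_split: "0 < c \<Longrightarrow> Fs D c = Os D c \<union> Fs D (2 * c)"
proof (intro equalityI subsetI)
  fix e assume c: "0 < c" and e: "e \<in> Fs D c"
  then obtain k where k: "e = c * k" unfolding Fs_def by auto
  show "e \<in> Os D c \<union> Fs D (2 * c)"
  proof (cases "odd k")
    case True then show ?thesis using e k unfolding Os_def Fs_def by auto
  next
    case False
    then obtain k' where "k = 2 * k'" by auto
    then show ?thesis using e k unfolding Os_def Fs_def by auto
  qed
next
  fix e assume c: "0 < c" and e: "e \<in> Os D c \<union> Fs D (2 * c)"
  then show "e \<in> Fs D c" unfolding Os_def Fs_def
    by (auto intro: dvd_mult_left simp: odd_pos)
qed

lemma Os_Fs_disj: "0 < c \<Longrightarrow> Os D c \<inter> Fs D (2 * c) = {}"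
proof (rule ccontr)
  assume c: "0 < c" and "Os D c \<inter> Fs D (2 * c) \<noteq> {}"
  then obtain e k m where "odd k" "e = c * k" "e = 2 * c * m" unfolding Os_def Fs_def by (auto elim!: dvdE)
  then have "k = 2 * m" using c by simp
  then show False using \<open>odd k\<close> by simp
qed

lemma Os_double: "(*) 2 ` Os D c \<inter> {..<D} = Os D (2 * c)"
proof (intro equalityI subsetI)
  fix x assume "x \<in> (*) 2 ` Os D c \<inter> {..<D}"
  then show "x \<in> Os D (2 * c)" unfolding Os_def by auto
next
  fix x assume "x \<in> Os D (2 * c)"
  then obtain k where k: "x < D" "odd k" "x = 2 * c * k" unfolding Os_def by auto
  then have "c * k \<in> Os D c" unfolding Os_def by auto
  then show "x \<in> (*) 2 ` Os D c \<inter> {..<D}" using k by (auto intro: rev_image_eqI)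
qed

lemma OF_one: "0 < c \<Longrightarrow> eqm D (pr (Os D c) * pr (Fs D c)) 1"
proof (induction "D - c" arbitrary: c rule: less_induct)
  case less
  show ?case
  proof (cases "D \<le> c")
    case True
    have h: "D \<le> c * k" if "0 < k" for k
    proof -
      have "c * 1 \<le> c * k" using that by (intro mult_le_mono2) simp
      then show ?thesis using True by linarith
    qed
    have "Os D c = {}"
    proof (rule equals0I)
      fix e assume "e \<in> Os D c"
      then obtain k where k: "e < D" "odd k" "e = c * k" unfolding Os_def by blast
      then have "D \<le> e" using h[of k] odd_pos[of k] by simp
      then show False using k by simp
    qed
    moreover have "Fs D c = {}"
    proof (rule equals0I)
      fix e assume "e \<in> Fs D c"
      then obtain k where k: "0 < e" "e < D" "e = c * k" unfolding Fs_def by (blast elim: dvdE)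
      then have "0 < k" by (cases k) auto
      then have "D \<le> e" using h[of k] k by simp
      then show False using k by simp
    qed
    ultimately show ?thesis by (simp add: pr_def)
  next
    case False
    have IH: "eqm D (pr (Os D (2*c)) * pr (Fs D (2*c))) 1"
      using less.hyps[of "2*c"] less.prems False by simp
    have "pr (Os D c) * pr (Fs D c) = pr (Os D c) ^ 2 * pr (Fs D (2*c))"
      using Fs_split[OF less.prems] Os_Fs_disj[OF less.prems]
      by (simp add: pr_union power2_eq_square mult.assoc)
    also have "\<dots> = pr ((*) 2 ` Os D c) * pr (Fs D (2*c))" by (simp add: pr_sq)
    also have "eqm D \<dots> (pr (Os D (2*c)) * pr (Fs D (2*c)))"
      using eqm_pr_trunc[of "(*) 2 ` Os D c" D] Os_double[of D c]
      by (intro eqm_mult eqm_refl) simp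
    finally show ?thesis using IH eqm_trans by blast
  qed
qed

definition PS :: "nat \<Rightarrow> nat \<Rightarrow> nat multiset set" where
  "PS N m = {M. (\<forall>x\<in>#M. 0 < x \<and> x \<le> N) \<and> sum_mset M = m}"

lemma size_le_sum: "(\<forall>x\<in>#M. 0 < x) \<Longrightarrow> size M \<le> sum_mset (M :: nat multiset)"
  by (induction M) auto

lemma mem_le_sum: "x \<in># M \<Longrightarrow> x \<le> sum_mset (M :: nat multiset)"
proof -
  assume "x \<in># M"
  then obtain M' where "M = add_mset x M'" by (blast dest: multi_member_split)
  then show ?thesis by simp
qed

lemma PS_fin: "finite (PS N m)"
proof (rule finite_subset)
  show "PS N m \<subseteq> (\<Union>s\<le>m. multisets_of_size {1..N} s)"
  proof
    fix M assume M: "M \<in> PS N m"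
    then have "size M \<le> m" using size_le_sum[of M] unfolding PS_def by auto
    moreover have "set_mset M \<subseteq> {1..N}" using M unfolding PS_def by auto
    ultimately show "M \<in> (\<Union>s\<le>m. multisets_of_size {1..N} s)"
      unfolding multisets_of_size_def by auto
  qed
qed auto

lemma PS_rec:
  "card (PS (Suc N) m) = card (PS N m) + (if Suc N \<le> m then card (PS (Suc N) (m - Suc N)) else 0)"
proof -
  let ?A = "{M \<in> PS (Suc N) m. Suc N \<in># M}"
  have split: "PS (Suc N) m = PS N m \<union> ?A"
  proof (intro equalityI subsetI)
    fix M assume M: "M \<in> PS (Suc N) m"
    show "M \<in> PS N m \<union> ?A"
    proof (cases "Suc N \<in># M")
      case True then show ?thesis using M by blast
    next
      case False
      then have "\<forall>x\<in>#M. 0 < x \<and> x \<le> N" using M unfolding PS_def using le_Suc_eq by blast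
      then show ?thesis using M unfolding PS_def by blast
    qed
  next
    fix M assume "M \<in> PS N m \<union> ?A"
    then show "M \<in> PS (Suc N) m" unfolding PS_def by auto
  qed
  have disj: "PS N m \<inter> ?A = {}" unfolding PS_def by auto
  have finA: "finite ?A" using PS_fin[of "Suc N" m] by simp
  have cA: "card ?A = (if Suc N \<le> m then card (PS (Suc N) (m - Suc N)) else 0)"
  proof (cases "Suc N \<le> m")
    case True
    have "bij_betw (add_mset (Suc N)) (PS (Suc N) (m - Suc N)) ?A"
    proof (rule bij_betwI')
      fix M assume "M \<in> PS (Suc N) (m - Suc N)"
      then show "add_mset (Suc N) M \<in> ?A" unfolding PS_def using True by auto
    next
      fix M assume M: "M \<in> ?A"
      then have M1: "M = add_mset (Suc N) (M - {#Suc N#})" by (simp add: insert_DiffM)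
      have "sum_mset M = Suc N + sum_mset (M - {#Suc N#})" by (subst M1) simp
      then have "M - {#Suc N#} \<in> PS (Suc N) (m - Suc N)"
        using M unfolding PS_def by (auto dest: in_diffD)
      then show "\<exists>x\<in>PS (Suc N) (m - Suc N). M = add_mset (Suc N) x" using M1 by blast
    qed simp
    then show ?thesis using True bij_betw_same_card by metis
  next
    case False
    have "?A = {}"
    proof (rule equals0I)
      fix M assume M: "M \<in> ?A"
      then have "Suc N \<le> sum_mset M" using mem_le_sum by simp
      moreover have "sum_mset M = m" using M unfolding PS_def by simp
      ultimately show False using False by simp
    qed
    then have "card ?A = 0" by (simp only: card.empty)
    then show ?thesis using False by simp
  qed
  have "card (PS (Suc N) m) = card (PS N m \<union> ?A)" by (rule arg_cong[OF split])
  also have "\<dots> = card (PS N m) + card ?A" by (rule card_Un_disjoint[OF PS_fin finA disj])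
  finally show ?thesis unfolding cA .
qed

definition G :: "nat \<Rightarrow> bf" where
  "G N = Abs_fps (\<lambda>m. of_nat (card (PS N m)))"

lemma bit_add_self[simp]: "(z :: bit) + z = 0"
  by (cases z) simp_all

lemma G_rec: "G (Suc N) * (1 + fps_X ^ Suc N) = G N"
proof (rule fps_ext)
  fix m
  show "fps_nth (G (Suc N) * (1 + fps_X ^ Suc N)) m = fps_nth (G N) m"
    unfolding distrib_left mult_1_right fps_add_nth fps_X_power_mult_right_nth G_def fps_nth_Abs_fps
    by (subst PS_rec[of N m]) (auto simp: add.assoc)
qed

lemma PS_0: "PS 0 m = (if m = 0 then {{#}} else {})"
proof -
  have e: "(\<forall>x\<in>#M. 0 < x \<and> x \<le> (0::nat)) \<longleftrightarrow> M = {#}" for M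
    by (cases M) auto
  show ?thesis unfolding PS_def e by auto
qed

lemma G_0: "G 0 = 1"
  by (rule fps_ext) (simp add: G_def PS_0)

lemma G_pr: "G N * pr {1..N} = 1"
proof (induction N)
  case 0 then show ?case by (simp add: G_0 pr_def)
next
  case (Suc N)
  have "pr {1..Suc N} = pr {1..N} * (1 + fps_X ^ Suc N)"
    unfolding pr_def by (simp add: mult.commute)
  then show ?case using Suc G_rec[of N] by (metis mult.assoc mult.commute)
qed

lemma G_nth: "m \<le> N \<Longrightarrow> fps_nth (G N) m = of_nat (partition_count (int m))"
proof -
  assume m: "m \<le> N"
  have "{M :: nat multiset. (\<forall>x \<in># M. 0 < x) \<and> int (sum_mset M) = int m} = {M. (\<forall>x \<in># M. 0 < x) \<and> sum_mset M = m}"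
    by (simp only: of_nat_eq_iff)
  also have "\<dots> = PS N m"
    unfolding PS_def using mem_le_sum m by (metis order.trans)
  finally have E: "{M :: nat multiset. (\<forall>x \<in># M. 0 < x) \<and> int (sum_mset M) = int m} = PS N m" .
  show ?thesis unfolding G_def partition_count_def E by simp
qed

definition km :: "nat \<Rightarrow> nat \<Rightarrow> nat" where
  "km N j = (if j \<le> N then 2 * (N - j) else 2 * (j - N) - 1)"
definition kinv :: "nat \<Rightarrow> nat \<Rightarrow> nat" where
  "kinv N k = (if even k then N - k div 2 else N + (k + 1) div 2)"

lemma km_props: "a \<le> 2*N \<Longrightarrow> kinv N (km N a) = a \<and> km N a \<le> 2*N"
proof (cases "a \<le> N")
  case True
  then show ?thesis unfolding km_def kinv_def by simp
next
  case False
  then obtain d where "a = N + Suc d" by (metis add_Suc_right less_imp_Suc_add not_le)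
  moreover assume "a \<le> 2*N"
  ultimately show ?thesis unfolding km_def kinv_def by simp
qed
lemma kinv_props: "b \<le> 2*N \<Longrightarrow> km N (kinv N b) = b \<and> kinv N b \<le> 2*N"
proof (cases "even b")
  case True
  then obtain c where c: "b = 2 * c" by blast
  moreover assume "b \<le> 2*N"
  ultimately show ?thesis unfolding km_def kinv_def by simp
next
  case False
  then obtain c where c: "b = 2 * c + 1" using oddE by blast
  moreover assume "b \<le> 2*N"
  ultimately show ?thesis unfolding km_def kinv_def by simp
qed

lemma reidx:
  assumes "\<And>j. j \<le> 2 * N \<Longrightarrow> g j = f (km N j)"
  shows "(\<Sum>j\<le>2*N. h (g j)) = (\<Sum>k\<le>2*N. h (f k))"
proof -
  have "(\<Sum>j\<le>2*N. h (g j)) = (\<Sum>j\<le>2*N. h (f (km N j)))"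
    using assms by (intro sum.cong) auto
  also have "\<dots> = (\<Sum>k\<le>2*N. h (f k))"
  proof (rule sum.reindex_bij_witness[where i = "kinv N" and j = "km N"])
    fix a assume "a \<in> {..2*N}"
    then show "kinv N (km N a) = a" "km N a \<in> {..2*N}"
      using km_props[of a N] by auto
  next
    fix b assume "b \<in> {..2*N}"
    then show "km N (kinv N b) = b" "kinv N b \<in> {..2*N}"
      using kinv_props[of b N] by auto
  qed simp
  finally show ?thesis .
qed

lemma gp_even: "4 * gen_pent (2 * t) = 6 * int t ^ 2 + 2 * int t"
proof -
  obtain s where s: "3 * int t ^ 2 + int t = 2 * s"
  proof -
    have "even (int t * (3 * int t + 1))" by simp
    then obtain s where "int t * (3 * int t + 1) = 2 * s" by blast
    then show ?thesis using that[of s] by (simp add: algebra_simps power2_eq_square)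
  qed
  have "6 * int (2 * t) ^ 2 + 2 * (3 - (-1) ^ (2 * t)) * int (2 * t) + (1 - (-1) ^ (2 * t)) = 16 * s"
    using s by (simp add: algebra_simps power2_eq_square)
  then have "gen_pent (2 * t) = s" unfolding gen_pent_def by simp
  then show ?thesis using s by simp
qed

lemma gp_odd: "4 * gen_pent (2 * m + 1) = 6 * int m ^ 2 + 10 * int m + 4"
proof -
  obtain s where s: "3 * int m ^ 2 + 5 * int m + 2 = 2 * s"
  proof -
    have "even ((int m + 1) * (3 * int m + 2))" by simp
    then obtain s where "(int m + 1) * (3 * int m + 2) = 2 * s" by blast
    then show ?thesis using that[of s] by (simp add: algebra_simps power2_eq_square)
  qed
  have "6 * int (2 * m + 1) ^ 2 + 2 * (3 - (-1) ^ (2 * m + 1)) * int (2 * m + 1) + (1 - (-1) ^ (2 * m + 1)) = 16 * s"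
    using s by (simp add: algebra_simps power2_eq_square)
  then have "gen_pent (2 * m + 1) = s" unfolding gen_pent_def by simp
  then show ?thesis using s by simp
qed

lemma gp_bounds: "0 \<le> gen_pent k \<and> int k \<le> 4 * gen_pent k"
proof (cases "even k")
  case True
  then obtain t where k: "k = 2 * t" by blast
  have g: "4 * gen_pent k = 6 * (int t * int t) + 2 * int t" using gp_even[of t] k by (simp add: power2_eq_square)
  have "int k = 2 * int t" using k by simp
  moreover have "0 \<le> int t * int t" by simp
  ultimately show ?thesis using g by linarith
next
  case False
  then obtain m where k: "k = 2 * m + 1" using oddE by blast
  have g: "4 * gen_pent k = 6 * (int m * int m) + 10 * int m + 4" using gp_odd[of m] k by (simp add: power2_eq_square)
  have "int k = 2 * int m + 1" using k by simp
  moreover have "0 \<le> int m * int m" by simp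
  ultimately show ?thesis using g by linarith
qed

lemma ex12: "int (ex 12 4 N j) = 4 * gen_pent (km N j)"
proof (cases "j \<le> N")
  case True
  define t where "t = N - j"
  have le: "4 * t \<le> 12 * tr (Suc t)" using ex_aux[of 4 12 t] by simp
  have "int (ex 12 4 N j) = 12 * int (tr (Suc t)) - 4 * int t"
    using True le by (simp add: ex_def t_def[symmetric] of_nat_diff)
  also have "\<dots> = 6 * int t ^ 2 + 2 * int t"
    using tr_int[of "Suc t"] by (simp add: algebra_simps power2_eq_square)
  finally show ?thesis using True gp_even[of t] by (simp add: km_def t_def)
next
  case False
  define m where "m = j - N - 1"
  have j: "j - N = Suc m" using False m_def by simp
  have "int (ex 12 4 N j) = 12 * int (tr (Suc m)) + 4 * int (Suc m)"
    using False by (simp add: ex_def j)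
  also have "\<dots> = 6 * int m ^ 2 + 10 * int m + 4"
    using tr_int[of "Suc m"] by (simp add: algebra_simps power2_eq_square)
  finally show ?thesis using False gp_odd[of m] by (simp add: km_def j)
qed

lemma ex4: "ex 4 1 N j = tr (Suc (km N j))"
proof (cases "j \<le> N")
  case True
  define t where "t = N - j"
  have le: "t \<le> 4 * tr (Suc t)" using ex_aux[of 1 4 t] by simp
  have "int (ex 4 1 N j) = 4 * int (tr (Suc t)) - int t"
    using True le by (simp add: ex_def t_def[symmetric] of_nat_diff)
  also have "\<dots> = int (tr (Suc (2 * t)))"
    using tr_int[of "Suc t"] tr_int[of "Suc (2 * t)"] by (simp add: algebra_simps)
  finally show ?thesis using True by (simp add: km_def t_def)
next
  case False
  define m where "m = j - N - 1"
  have j: "j - N = Suc m" using False m_def by simp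
  have "int (ex 4 1 N j) = 4 * int (tr (Suc m)) + int (Suc m)"
    using False by (simp add: ex_def j)
  also have "\<dots> = int (tr (Suc (Suc (2 * m))))"
    using tr_int[of "Suc m"] tr_int[of "Suc (Suc (2 * m))"] by (simp add: algebra_simps)
  finally show ?thesis using False by (simp add: km_def j)
qed

lemma Lp_pr:
  assumes "0 < b" "b < a"
  shows "Lp a b N = pr ((\<lambda>k. a*k - b) ` {1..N}) * pr ((\<lambda>k. a*k + b) ` {..<N})"
proof -
  have "inj_on (\<lambda>k. a*k - b) {1..N}"
  proof (rule inj_onI)
    fix k k' assume k: "k \<in> {1..N}" "k' \<in> {1..N}" and e: "a*k - b = a*k' - b"
    have "a * 1 \<le> a * k" "a * 1 \<le> a * k'" using k by (intro mult_le_mono2; simp)+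
    then have "a*k = a*k'" using e assms by linarith
    then show "k = k'" using assms by simp
  qed
  moreover have "inj_on (\<lambda>k. a*k + b) {..<N}" by (rule inj_onI) (use assms in simp)
  ultimately show ?thesis unfolding Lp_def by (simp add: pr_image)
qed

lemma set12:
  assumes "D \<le> N"
  shows "((*) 12 ` {1..D} \<union> (\<lambda>k. 12*k - 4) ` {1..N} \<union> (\<lambda>k. 12*k + 4) ` {..<N}) \<inter> {..<D} = Fs D 4"
proof (intro equalityI subsetI)
  fix x assume "x \<in> ((*) 12 ` {1..D} \<union> (\<lambda>k. 12*k - 4) ` {1..N} \<union> (\<lambda>k. 12*k + 4) ` {..<N}) \<inter> {..<D}"
  then show "x \<in> Fs D 4" unfolding Fs_def by (auto; presburger)
next
  fix x assume "x \<in> Fs D 4"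
  then have x: "0 < x" "x < D" "4 dvd x" unfolding Fs_def by auto
  define q where "q = x div 12"
  have q: "q \<le> x" unfolding q_def by simp
  have "x mod 12 = 0 \<or> x mod 12 = 4 \<or> x mod 12 = 8" using x(3) by presburger
  moreover have "x = 12 * q + x mod 12" unfolding q_def by simp
  ultimately consider "x = 12 * q" | "x = 12 * q + 4" | "x = 12 * q + 8" by auto
  then show "x \<in> ((*) 12 ` {1..D} \<union> (\<lambda>k. 12*k - 4) ` {1..N} \<union> (\<lambda>k. 12*k + 4) ` {..<N}) \<inter> {..<D}"
  proof cases
    case 1
    then have "q \<in> {1..D}" using x q by auto
    then show ?thesis using 1 x by auto
  next
    case 2
    then have "q \<in> {..<N}" using x q assms by auto
    then show ?thesis using 2 x by auto
  next
    case 3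
    then have "Suc q \<in> {1..N}" "x = 12 * Suc q - 4" using x q assms by auto
    then have "x \<in> (\<lambda>k. 12*k - 4) ` {1..N}" by (rule rev_image_eqI)
    then show ?thesis using x by blast
  qed
qed

lemma lin_neq: "r < c \<Longrightarrow> s < c \<Longrightarrow> r \<noteq> s \<Longrightarrow> c * a + r \<noteq> c * b + (s::nat)"
proof
  assume rs: "r < c" "s < c" "r \<noteq> s" and e: "c * a + r = c * b + s"
  consider "a = b" | "a < b" | "b < a" by linarith
  then show False
  proof cases
    case 1 then show ?thesis using e rs by simp
  next
    case 2
    then have "c * Suc a \<le> c * b" by (intro mult_le_mono2) simp
    then have "c * a + c \<le> c * b" by simp
    then show ?thesis using e rs by linarith
  next
    case 3
    then have "c * Suc b \<le> c * a" by (intro mult_le_mono2) simp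
    then have "c * b + c \<le> c * a" by simp
    then show ?thesis using e rs by linarith
  qed
qed

lemma disj12:
  "(*) 12 ` {1..D} \<inter> (\<lambda>k. 12*k - 4) ` {1..N} = {}"
  "((*) 12 ` {1..D} \<union> (\<lambda>k. 12*k - 4) ` {1..N}) \<inter> (\<lambda>k. 12*k + 4) ` {..<N} = {}"
  for D N :: nat
proof -
  have m1: "12 * k - 4 = 12 * (k - 1) + 8" if "1 \<le> k" for k :: nat using that by simp
  show "(*) 12 ` {1..D} \<inter> (\<lambda>k. 12*k - 4) ` {1..N} = {}"
  proof (rule equals0I)
    fix x assume "x \<in> (*) 12 ` {1..D} \<inter> (\<lambda>k. 12*k - 4) ` {1..N}"
    then obtain k k' where "x = 12 * k" "k' \<in> {1..N}" "x = 12 * k' - 4" by blast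
    then have "x = 12 * k + 0" "x = 12 * (k' - 1) + 8" using m1[of k'] by auto
    then show False using lin_neq[of 0 12 8 k "k' - 1"] by simp
  qed
  show "((*) 12 ` {1..D} \<union> (\<lambda>k. 12*k - 4) ` {1..N}) \<inter> (\<lambda>k. 12*k + 4) ` {..<N} = {}"
  proof (rule equals0I)
    fix x assume x: "x \<in> ((*) 12 ` {1..D} \<union> (\<lambda>k. 12*k - 4) ` {1..N}) \<inter> (\<lambda>k. 12*k + 4) ` {..<N}"
    then obtain k' where k': "x = 12 * k' + 4" by blast
    from x have "x \<in> (*) 12 ` {1..D} \<or> x \<in> (\<lambda>k. 12*k - 4) ` {1..N}" by blast
    then consider (a) k where "x = 12 * k + 0" | (b) k where "x = 12 * (k - 1) + 8"
    proof
      assume "x \<in> (*) 12 ` {1..D}"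
      then obtain k where "x = 12 * k" by blast
      then show thesis using that(1)[of k] by simp
    next
      assume "x \<in> (\<lambda>k. 12*k - 4) ` {1..N}"
      then obtain k where "k \<in> {1..N}" "x = 12 * k - 4" by blast
      then show thesis using that(2)[of k] m1[of k] by simp
    qed
    then show False
    proof cases
      case a then show False using k' lin_neq[of 0 12 4 k k'] by simp
    next
      case b then show False using k' lin_neq[of 8 12 4 "k - 1" k'] by simp
    qed
  qed
qed

lemma set4:
  assumes "D \<le> N"
  shows "((*) 4 ` {1..D} \<union> (\<lambda>k. 4*k - 1) ` {1..N} \<union> (\<lambda>k. 4*k + 1) ` {..<N}) \<inter> {..<D} = Fs D 4 \<union> Os D 1"
proof (intro equalityI subsetI)
  fix x assume "x \<in> ((*) 4 ` {1..D} \<union> (\<lambda>k. 4*k - 1) ` {1..N} \<union> (\<lambda>k. 4*k + 1) ` {..<N}) \<inter> {..<D}"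
  then show "x \<in> Fs D 4 \<union> Os D 1" unfolding Fs_def Os_def by (auto; presburger)
next
  fix x assume "x \<in> Fs D 4 \<union> Os D 1"
  then have x: "x < D" "(0 < x \<and> 4 dvd x) \<or> odd x" unfolding Fs_def Os_def by auto
  define q where "q = x div 4"
  have q: "q \<le> x" unfolding q_def by simp
  have "x = 4 * q + x mod 4" unfolding q_def by simp
  moreover have "(0 < x \<and> x mod 4 = 0) \<or> x mod 4 = 1 \<or> x mod 4 = 3" using x(2) by presburger
  ultimately consider "x = 4 * q" "0 < x" | "x = 4 * q + 1" | "x = 4 * q + 3" by auto
  then show "x \<in> ((*) 4 ` {1..D} \<union> (\<lambda>k. 4*k - 1) ` {1..N} \<union> (\<lambda>k. 4*k + 1) ` {..<N}) \<inter> {..<D}"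
  proof cases
    case 1
    then have "q \<in> {1..D}" using x q by auto
    then show ?thesis using 1 x by auto
  next
    case 2
    then have "q \<in> {..<N}" using x q assms by auto
    then show ?thesis using 2 x by auto
  next
    case 3
    then have "Suc q \<in> {1..N}" "x = 4 * Suc q - 1" using x q assms by auto
    then have "x \<in> (\<lambda>k. 4*k - 1) ` {1..N}" by (rule rev_image_eqI)
    then show ?thesis using x by blast
  qed
qed

lemma disj4:
  "(*) 4 ` {1..D} \<inter> (\<lambda>k. 4*k - 1) ` {1..N} = {}"
  "((*) 4 ` {1..D} \<union> (\<lambda>k. 4*k - 1) ` {1..N}) \<inter> (\<lambda>k. 4*k + 1) ` {..<N} = {}"
  "Fs D 4 \<inter> Os D 1 = {}"
  for D N :: nat
proof -
  have m1: "4 * k - 1 = 4 * (k - 1) + 3" if "1 \<le> k" for k :: nat using that by simp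
  show "(*) 4 ` {1..D} \<inter> (\<lambda>k. 4*k - 1) ` {1..N} = {}"
  proof (rule equals0I)
    fix x assume "x \<in> (*) 4 ` {1..D} \<inter> (\<lambda>k. 4*k - 1) ` {1..N}"
    then obtain k k' where "x = 4 * k" "k' \<in> {1..N}" "x = 4 * k' - 1" by blast
    then have "x = 4 * k + 0" "x = 4 * (k' - 1) + 3" using m1[of k'] by auto
    then show False using lin_neq[of 0 4 3 k "k' - 1"] by simp
  qed
  show "((*) 4 ` {1..D} \<union> (\<lambda>k. 4*k - 1) ` {1..N}) \<inter> (\<lambda>k. 4*k + 1) ` {..<N} = {}"
  proof (rule equals0I)
    fix x assume x: "x \<in> ((*) 4 ` {1..D} \<union> (\<lambda>k. 4*k - 1) ` {1..N}) \<inter> (\<lambda>k. 4*k + 1) ` {..<N}"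
    then obtain k' where k': "x = 4 * k' + 1" by blast
    from x have "x \<in> (*) 4 ` {1..D} \<or> x \<in> (\<lambda>k. 4*k - 1) ` {1..N}" by blast
    then consider (a) k where "x = 4 * k + 0" | (b) k where "x = 4 * (k - 1) + 3"
    proof
      assume "x \<in> (*) 4 ` {1..D}"
      then obtain k where "x = 4 * k" by blast
      then show thesis using that(1)[of k] by simp
    next
      assume "x \<in> (\<lambda>k. 4*k - 1) ` {1..N}"
      then obtain k where "k \<in> {1..N}" "x = 4 * k - 1" by blast
      then show thesis using that(2)[of k] m1[of k] by simp
    qed
    then show False
    proof cases
      case a then show False using k' lin_neq[of 0 4 1 k k'] by simp
    next
      case b then show False using k' lin_neq[of 3 4 1 "k - 1" k'] by simp
    qed
  qed
  show "Fs D 4 \<inter> Os D 1 = {}"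
  proof (rule equals0I)
    fix x assume "x \<in> Fs D 4 \<inter> Os D 1"
    then have "4 dvd x" "odd x" unfolding Fs_def Os_def by auto
    then show False by (metis dvd_trans even_numeral)
  qed
qed

lemma spec_pr:
  assumes "0 < b" "b < a"
    and d1: "(*) a ` {1..D} \<inter> (\<lambda>k. a*k - b) ` {1..N} = {}"
    and d2: "((*) a ` {1..D} \<union> (\<lambda>k. a*k - b) ` {1..N}) \<inter> (\<lambda>k. a*k + b) ` {..<N} = {}"
  shows "pp (fps_X ^ a) D * Lp a b N = pr ((*) a ` {1..D} \<union> (\<lambda>k. a*k - b) ` {1..N} \<union> (\<lambda>k. a*k + b) ` {..<N})"
  using assms by (simp add: pp_pr Lp_pr pr_union mult.assoc)

declare eqm_trans[trans]

lemma main_eqm: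
  "eqm D (G D * (\<Sum>j\<le>2*(2*D). fps_X ^ (ex 12 4 (2*D) j))) (\<Sum>j\<le>2*(2*D). fps_X ^ (ex 4 1 (2*D) j))"
proof -
  let ?S12 = "(\<Sum>j\<le>2*(2*D). fps_X ^ (ex 12 4 (2*D) j)) :: bf"
  let ?S4 = "(\<Sum>j\<le>2*(2*D). fps_X ^ (ex 4 1 (2*D) j)) :: bf"
  let ?F4 = "pr (Fs D 4)" and ?F1 = "pr (Fs D 1)" and ?O1 = "pr (Os D 1)"
  have F12: "eqm D ?S12 ?F4"
  proof -
    have "eqm D (pp (fps_X ^ 12) D * Lp 12 4 (2*D)) ?S12" using jtp_trunc[of 4 12 D] by simp
    moreover have "eqm D (pp (fps_X ^ 12) D * Lp 12 4 (2*D)) ?F4"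
    proof -
      let ?U = "(*) 12 ` {1..D} \<union> (\<lambda>k. 12*k - 4) ` {1..2*D} \<union> (\<lambda>k. 12*k + 4) ` {..<2*D}"
      have "eqm D (pr ?U) (pr (?U \<inter> {..<D}))" by (rule eqm_pr_trunc) simp
      then show ?thesis using spec_pr[of 4 12 D "2*D", OF _ _ disj12] set12[of D "2*D"] by simp
    qed
    ultimately show ?thesis using eqm_sym eqm_trans by blast
  qed
  have F4: "eqm D ?S4 (?F4 * ?O1)"
  proof -
    have "eqm D (pp (fps_X ^ 4) D * Lp 4 1 (2*D)) ?S4" using jtp_trunc[of 1 4 D] by simp
    moreover have "eqm D (pp (fps_X ^ 4) D * Lp 4 1 (2*D)) (?F4 * ?O1)"
    proof -
      let ?U = "(*) 4 ` {1..D} \<union> (\<lambda>k. 4*k - 1) ` {1..2*D} \<union> (\<lambda>k. 4*k + 1) ` {..<2*D}"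
      have "eqm D (pr ?U) (pr (?U \<inter> {..<D}))" by (rule eqm_pr_trunc) simp
      moreover have "pr (Fs D 4 \<union> Os D 1) = pr (Fs D 4) * pr (Os D 1)"
        by (rule pr_union) (simp_all only: Fs_fin Os_fin disj4(3))
      ultimately show ?thesis using spec_pr[of 1 4 D "2*D", OF _ _ disj4(1,2)] set4[of D "2*D"]
        by simp
    qed
    ultimately show ?thesis using eqm_sym eqm_trans by blast
  qed
  have G1: "eqm D (G D * ?F1) 1"
  proof -
    have "{1..D} \<inter> {..<D} = Fs D 1" unfolding Fs_def by auto
    then have "eqm D (pr {1..D}) ?F1" using eqm_pr_trunc[of "{1..D}" D] by simp
    then have "eqm D (G D * pr {1..D}) (G D * ?F1)" by (intro eqm_mult eqm_refl)
    then show ?thesis using G_pr[of D] eqm_sym by simp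
  qed
  have OF: "eqm D (?O1 * ?F1) 1" by (rule OF_one) simp
  have "eqm D (G D * ?S12) (G D * ?F4)" by (intro eqm_mult eqm_refl F12)
  also have "G D * ?F4 = (G D * ?F4) * 1" by simp
  also have "eqm D \<dots> ((G D * ?F4) * (?O1 * ?F1))" by (intro eqm_mult eqm_refl eqm_sym[OF OF])
  also have "(G D * ?F4) * (?O1 * ?F1) = (G D * ?F1) * (?F4 * ?O1)" by (simp only: mult_ac)
  also have "eqm D \<dots> (1 * (?F4 * ?O1))" by (intro eqm_mult eqm_refl G1)
  also have "eqm D \<dots> ?S4" using eqm_sym[OF F4] by simp
  finally show ?thesis .
qed

lemma bit_of_int: "(of_int x :: bit) = (if even x then 0 else 1)"
proof -
  have "x = 2 * (x div 2) + x mod 2" by simp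
  then have "(of_int x :: bit) = of_int (2 * (x div 2)) + of_int (x mod 2)" by (metis of_int_add)
  also have "(of_int (2 * (x div 2)) :: bit) = 0" by simp
  finally have e: "(of_int x :: bit) = of_int (x mod 2)" by simp
  show ?thesis
  proof (cases "even x")
    case True then have "x mod 2 = 0" by presburger
    then show ?thesis using e True by simp
  next
    case False then have "x mod 2 = 1" by presburger
    then show ?thesis using e False by simp
  qed
qed

lemma cong_bit: "(of_int x :: bit) = of_int y \<Longrightarrow> [x = y] (mod 2)"
  unfolding cong_def bit_of_int by (auto split: if_splits) presburger+

lemma tri_eq: "int (tr (Suc k)) = int k * (int k + 1) div 2"
proof -
  have "int k * (int k + 1) = 2 * int (tr (Suc k))" using tr_int[of "Suc k"] by (simp add: algebra_simps)
  then show ?thesis by simp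
qed

lemma triangular_iff: "triangular (int n) \<longleftrightarrow> (\<exists>k. tr (Suc k) = n)"
  unfolding triangular_def tri_eq[symmetric] of_nat_eq_iff by (auto simp del: tr_Suc)

lemma tr_inj: "tr (Suc k) = tr (Suc k') \<Longrightarrow> k = k'"
proof -
  have "strict_mono (\<lambda>k. tr (Suc k))" unfolding strict_mono_Suc_iff by simp
  then show "tr (Suc k) = tr (Suc k') \<Longrightarrow> k = k'" using strict_mono_eq by metis
qed

theorem theorem7:
  fixes n :: int
  shows "[(\<Sum>j \<in> {j::nat. 4 * gen_pent j \<le> n}. int (partition_count (n - 4 * gen_pent j)))
          = (if triangular n then 1 else 0)] (mod 2)"
proof (cases "n < 0")
  case True
  have "{j::nat. 4 * gen_pent j \<le> n} = {}"
  proof (rule equals0I)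
    fix j assume "j \<in> {j::nat. 4 * gen_pent j \<le> n}"
    moreover have "0 \<le> gen_pent j" using gp_bounds by blast
    ultimately show False using True by simp
  qed
  moreover have "\<not> triangular n"
  proof
    assume "triangular n"
    then obtain k where "n = int k * (int k + 1) div 2" unfolding triangular_def by blast
    moreover have "0 \<le> int k * (int k + 1) div 2" by (simp add: pos_imp_zdiv_nonneg_iff)
    ultimately show False using True by simp
  qed
  ultimately show ?thesis by simp
next
  case False
  then obtain n' where n: "n = int n'" by (metis nonneg_int_cases not_less)
  define D where "D = Suc n'"
  define f where "f k = nat (4 * gen_pent k)" for k
  let ?S12 = "(\<Sum>j\<le>2*(2*D). fps_X ^ (ex 12 4 (2*D) j)) :: bf"
  let ?S4 = "(\<Sum>j\<le>2*(2*D). fps_X ^ (ex 4 1 (2*D) j)) :: bf"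
  have E: "fps_nth (G D * ?S12) n' = fps_nth ?S4 n'" using main_eqm[of D] unfolding eqm_def D_def by simp
  have S12: "?S12 = (\<Sum>k\<le>2*(2*D). fps_X ^ f k)"
  proof (rule reidx[where h = "\<lambda>e. fps_X ^ e" and g = "ex 12 4 (2*D)" and f = f])
    fix j assume "j \<le> 2*(2*D)"
    show "ex 12 4 (2*D) j = f (km (2*D) j)" unfolding f_def ex12[symmetric] by simp
  qed
  have S4: "?S4 = (\<Sum>k\<le>2*(2*D). fps_X ^ tr (Suc k))"
    by (rule reidx[where h = "\<lambda>e. fps_X ^ e" and g = "ex 4 1 (2*D)" and f = "\<lambda>k. tr (Suc k)"]) (rule ex4)
  have set: "{k \<in> {..2*(2*D)}. f k \<le> n'} = {j::nat. 4 * gen_pent j \<le> n}"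
  proof (intro equalityI subsetI)
    fix k assume "k \<in> {k \<in> {..2*(2*D)}. f k \<le> n'}"
    then show "k \<in> {j::nat. 4 * gen_pent j \<le> n}" using gp_bounds[of k] n unfolding f_def by auto
  next
    fix k assume k: "k \<in> {j::nat. 4 * gen_pent j \<le> n}"
    then have "int k \<le> n" using gp_bounds[of k] by simp
    then have "k \<le> 2*(2*D)" using n D_def by simp
    then show "k \<in> {k \<in> {..2*(2*D)}. f k \<le> n'}" using k gp_bounds[of k] n unfolding f_def by auto
  qed
  have "fps_nth (G D * ?S12) n' = (\<Sum>k\<le>2*(2*D). if n' < f k then 0 else fps_nth (G D) (n' - f k))"
    unfolding S12 sum_distrib_left fps_sum_nth fps_X_power_mult_right_nth by simp
  also have "\<dots> = (\<Sum>k\<le>2*(2*D). if f k \<le> n' then of_nat (partition_count (int (n' - f k))) else 0)"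
  proof (rule sum.cong[OF refl])
    fix k
    show "(if n' < f k then 0 else fps_nth (G D) (n' - f k)) = (if f k \<le> n' then of_nat (partition_count (int (n' - f k))) else 0)"
    proof (cases "f k \<le> n'")
      case True
      have "n' - f k \<le> D" unfolding D_def by simp
      then show ?thesis using True G_nth[of "n' - f k" D] by simp
    qed simp
  qed
  also have "\<dots> = (\<Sum>k\<in>{k \<in> {..2*(2*D)}. f k \<le> n'}. of_nat (partition_count (int (n' - f k))))"
    by (rule sum.inter_filter[symmetric]) simp
  also have "\<dots> = (\<Sum>j \<in> {j::nat. 4 * gen_pent j \<le> n}. of_nat (partition_count (n - 4 * gen_pent j)))"
    unfolding set[symmetric]
  proof (rule sum.cong[OF refl])
    fix k assume "k \<in> {k \<in> {..2*(2*D)}. f k \<le> n'}"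
    then have "int (n' - f k) = n - 4 * gen_pent k" using gp_bounds[of k] n unfolding f_def by auto
    then show "(of_nat (partition_count (int (n' - f k))) :: bit) = of_nat (partition_count (n - 4 * gen_pent k))"
      by simp
  qed
  also have "\<dots> = of_int (\<Sum>j \<in> {j::nat. 4 * gen_pent j \<le> n}. int (partition_count (n - 4 * gen_pent j)))"
    by simp
  finally have L: "fps_nth (G D * ?S12) n' = of_int (\<Sum>j \<in> {j::nat. 4 * gen_pent j \<le> n}. int (partition_count (n - 4 * gen_pent j)))" .
  have "fps_nth ?S4 n' = (\<Sum>k\<le>2*(2*D). if n' = tr (Suc k) then 1 else 0)"
    unfolding S4 fps_sum_nth by simp
  also have "\<dots> = of_int (if triangular n then 1 else 0)"
  proof (cases "triangular n")
    case True
    then obtain k0 where k0: "tr (Suc k0) = n'" using triangular_iff n by blast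
    have "k0 \<le> 2*(2*D)" using tr_Suc_ge[of k0] k0 D_def by simp
    have "(\<Sum>k\<le>2*(2*D). if n' = tr (Suc k) then 1 else 0) = (\<Sum>k\<le>2*(2*D). if k = k0 then (1::bit) else 0)"
    proof (rule sum.cong[OF refl])
      fix k
      have "(n' = tr (Suc k)) = (k = k0)" using k0 tr_inj by metis
      then show "(if n' = tr (Suc k) then (1::bit) else 0) = (if k = k0 then 1 else 0)" by (simp only:)
    qed
    also have "\<dots> = 1" using \<open>k0 \<le> 2*(2*D)\<close> by simp
    finally show ?thesis using True by simp
  next
    case False
    then have "\<forall>k. n' \<noteq> tr (Suc k)" using triangular_iff n by metis
    then have "(\<Sum>k\<le>2*(2*D). if n' = tr (Suc k) then (1::bit) else 0) = 0" by (intro sum.neutral) simp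
    then show ?thesis using False by simp
  qed
  finally have R: "fps_nth ?S4 n' = of_int (if triangular n then 1 else 0)" .
  show ?thesis by (rule cong_bit) (use E L R in simp)
qed

end
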